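(* Let $n>2$ be an integer and $g=3n+1$, and let $G=\{\ell_1<\dots<\ell_g\}$ be a pure $(2n)$-sparse gapset of genus $g$. Then there is a unique $\alpha\in[1,g-1]$ such that $\ell_{\alpha+1}-\ell_\alpha=2n$.
   Context: A gapset is a finite set $G\subset\mathbb{N}=\{1,2,\dots\}$ such that whenever $z\in G$ and $z=x+y$ with $x,y\in\mathbb{N}$, then $x\in G$ or $y\in G$; its genus is $g=\#G$. $G$ is pure $\kappa$-sparse if $\ell_{i+1}-\ell_i\le\kappa$ for all $i$ with equality for some $i$. *)

theory Defs
  imports Main
begin

definition gapset :: "nat set \<Rightarrow> bool" where
  "gapset G \<longleftrightarrow> finite G \<and> 0 \<notin> G \<and>
     (\<forall>z\<in>G. \<forall>x y. 0 < x \<and> 0 < y \<and> z = x + y \<longrightarrow> x \<in> G \<or> y \<in> G)"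

definition ell :: "nat set \<Rightarrow> nat \<Rightarrow> nat" where
  "ell G i = sorted_list_of_set G ! (i - 1)"

definition pure_sparse :: "nat \<Rightarrow> nat set \<Rightarrow> bool" where
  "pure_sparse \<kappa> G \<longleftrightarrow>
     (\<forall>i. 1 \<le> i \<and> i < card G \<longrightarrow> ell G (i + 1) - ell G i \<le> \<kappa>) \<and>
     (\<exists>i. 1 \<le> i \<and> i < card G \<and> ell G (i + 1) - ell G i = \<kappa>)"

end

theory Submission
  imports Defs
begin

lemma ell_between:
  assumes "finite G" "1 \<le> i" "i < card G" "x \<in> G"
    and "ell G i < x" "x < ell G (i+1)"
  shows False
proof -
  let ?xs = "sorted_list_of_set G"
  have s: "sorted ?xs" and l: "length ?xs = card G" and st: "set ?xs = G"
    using assms(1) by auto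
  obtain j where j: "j < length ?xs" "?xs ! j = x" using assms(4) st by (metis in_set_conv_nth)
  show False
  proof (cases "j \<le> i - 1")
    case True
    then have "?xs ! j \<le> ?xs ! (i-1)" using s j l assms by (intro sorted_nth_mono) auto
    then show ?thesis using assms(5) j unfolding ell_def by simp
  next
    case False
    then have "?xs ! i \<le> ?xs ! j" using s j l assms by (intro sorted_nth_mono) auto
    then show ?thesis using assms(6) j unfolding ell_def by simp
  qed
qed

lemma ell_mono:
  assumes "finite G" "1 \<le> i" "i \<le> j" "j \<le> card G"
  shows "ell G i \<le> ell G j"
proof -
  let ?xs = "sorted_list_of_set G"
  have s: "sorted ?xs" and l: "length ?xs = card G"
    using assms(1) by auto
  show ?thesis unfolding ell_def using s l assms by (intro sorted_nth_mono) auto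
qed

lemma two_gaps_False:
  assumes "n > 2" "gapset G" "card G = 3 * n + 1"
    and "1 \<le> p" "p < q" "q < card G"
    and gp: "ell G (p + 1) - ell G p = 2 * n"
    and gq: "ell G (q + 1) - ell G q = 2 * n"
  shows False
proof -
  have fin: "finite G" and g0: "0 \<notin> G"
    and gs: "\<And>z x y. z \<in> G \<Longrightarrow> 0 < x \<Longrightarrow> 0 < y \<Longrightarrow> z = x + y \<Longrightarrow> x \<in> G \<or> y \<in> G"
    using assms(2) unfolding gapset_def by blast+
  define a where "a = ell G p"
  define b where "b = ell G q"
  define F where "F = ell G (q+1)"
  have Fb: "F = b + 2*n" using gq assms(1) unfolding F_def b_def by linarith
  have a2: "ell G (p+1) = a + 2*n" using gp assms(1) unfolding a_def by linarith
  have ab: "a + 2*n \<le> b" using ell_mono[OF fin, of "p+1" q] assms a2 unfolding b_def by simp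
  have FG: "F \<in> G" unfolding F_def ell_def using fin assms
    by (metis Suc_eq_plus1 add_diff_cancel_right' length_sorted_list_of_set nth_mem set_sorted_list_of_set
        Suc_leI le_imp_less_Suc less_imp_le_nat not_less_eq)
  define A where "A = {a+1..<a+2*n} \<union> {b+1..<b+2*n}"
  have dis: "{a+1..<a+2*n} \<inter> {b+1..<b+2*n} = {}" using ab by auto
  have cA: "card A = 4*n - 2" unfolding A_def using card_Un_disjoint[OF _ _ dis] assms(1) by simp
  have AG: "A \<inter> G = {}"
  proof (rule ccontr)
    assume "A \<inter> G \<noteq> {}"
    then obtain x where x: "x \<in> A" "x \<in> G" by blast
    show False
    proof (cases "x < a + 2*n")
      case True
      then show ?thesis using x ell_between[OF fin assms(4) _ x(2)] a2 assms(5,6) ab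
        unfolding A_def a_def by auto
    next
      case False
      then have "b < x \<and> x < F" using x ab Fb unfolding A_def by auto
      then show ?thesis using ell_between[OF fin _ assms(6) x(2)] assms(4,5)
        unfolding b_def F_def by auto
    qed
  qed
  have AF: "\<And>s. s \<in> A \<Longrightarrow> 0 < s \<and> s < F" using ab Fb unfolding A_def by auto
  have img: "(\<lambda>s. F - s) ` A \<subseteq> G - {F}"
  proof
    fix y assume "y \<in> (\<lambda>s. F - s) ` A"
    then obtain s where s: "s \<in> A" "y = F - s" by blast
    have "s \<notin> G" using AG s by blast
    moreover have "s \<in> G \<or> F - s \<in> G" using gs[OF FG, of s "F - s"] AF[OF s(1)] by auto
    ultimately show "y \<in> G - {F}" using s AF[OF s(1)] by auto
  qed
  have inj: "inj_on (\<lambda>s. F - s) A" unfolding inj_on_def by (metis AF diff_diff_cancel less_imp_le_nat)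
  have "card A \<le> card (G - {F})"
    using card_inj_on_le[OF inj img] fin by simp
  also have "\<dots> = 3*n" using FG assms(3) fin by simp
  finally show False using cA assms(1) by simp
qed

theorem mainTheorem18:
  fixes n :: nat and G :: "nat set"
  assumes "n > 2"
    and "gapset G"
    and "card G = 3 * n + 1"
    and "pure_sparse (2 * n) G"
  shows "\<exists>!\<alpha>. 1 \<le> \<alpha> \<and> \<alpha> \<le> card G - 1 \<and> ell G (\<alpha> + 1) - ell G \<alpha> = 2 * n"
proof -
  obtain i where i: "1 \<le> i" "i < card G" "ell G (i + 1) - ell G i = 2 * n"
    using assms(4) unfolding pure_sparse_def by blast
  show ?thesis
  proof (rule ex1I[of _ i])
    show "1 \<le> i \<and> i \<le> card G - 1 \<and> ell G (i + 1) - ell G i = 2 * n" using i by simp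
  next
    fix j assume j: "1 \<le> j \<and> j \<le> card G - 1 \<and> ell G (j + 1) - ell G j = 2 * n"
    then have jl: "j < card G" using assms(3) by simp
    show "j = i"
    proof (rule ccontr)
      assume "j \<noteq> i"
      then have "j < i \<or> i < j" by auto
      then show False
      proof
        assume "j < i" then show False
          using two_gaps_False[OF assms(1-3), of j i] j i by simp
      next
        assume "i < j" then show False
          using two_gaps_False[OF assms(1-3), of i j] j i jl by simp
      qed
    qed
  qed
qed

end
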